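(* Let $n\ge2$ and $A,B\in M_n(\mathbb C)$. Then $\mathbb C A=\mathbb C B$ if and only if $({}^\perp A)\cap\mathcal R_1=({}^\perp B)\cap\mathcal R_1$.
   Context: $M_n(\mathbb C)$ carries the operator (spectral) norm. $X\perp Y$ (Birkhoff–James orthogonality) means $\|X+\lambda Y\|\ge\|X\|$ for all $\lambda\in\mathbb C$; ${}^\perp A:=\{X: X\perp A\}$. $\mathcal R_1:=\{X\in M_n(\mathbb C):\mathrm{rk}\,X=1\}$. *)

theory Defs
  imports "HOL-Analysis.Analysis"
begin

definition opnorm :: "complex^'n^'n \<Rightarrow> real" where
  "opnorm A = onorm (\<lambda>x::complex^'n. A *v x)"

definition cscale :: "complex \<Rightarrow> complex^'n^'m \<Rightarrow> complex^'n^'m" where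
  "cscale c A = (\<chi> i j. c * A$i$j)"

definition bj_orth :: "complex^'n^'n \<Rightarrow> complex^'n^'n \<Rightarrow> bool" where
  "bj_orth X Y \<longleftrightarrow> (\<forall>c::complex. opnorm (X + cscale c Y) \<ge> opnorm X)"

definition lperp :: "complex^'n^'n \<Rightarrow> (complex^'n^'n) set" where
  "lperp A = {X. bj_orth X A}"

definition rank_one :: "(complex^'n^'n) set" where
  "rank_one = {X. rank X = 1}"

definition cline :: "complex^'n^'n \<Rightarrow> (complex^'n^'n) set" where
  "cline A = {cscale c A | c. True}"

end

theory Submission
  imports Defs
begin

definition outer :: "complex^'n \<Rightarrow> complex^'n \<Rightarrow> complex^'n^'n" where
  "outer u v = (\<chi> i j. u$i * v$j)"

definition bil :: "complex^'n^'n \<Rightarrow> complex^'n \<Rightarrow> complex^'n \<Rightarrow> complex" where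
  "bil A x y = (\<Sum>i\<in>UNIV. \<Sum>j\<in>UNIV. x$i * A$i$j * y$j)"

lemma rank_outer:
  fixes u v :: "complex^'n"
  assumes "u \<noteq> 0" "v \<noteq> 0"
  shows "rank (outer u v) = 1"
proof -
  obtain i where i: "u$i \<noteq> 0" using assms(1) by (metis vec_eq_iff zero_index)
  have rw: "row k (outer u v) = u$k *s v" for k
    by (simp add: row_def outer_def vec_eq_iff)
  have "rows (outer u v) \<subseteq> vec.span {v}"
    using vec.span_scale[OF vec.span_base[of v "{v}"]] by (auto simp: rows_def rw)
  hence le: "vec.dim (rows (outer u v)) \<le> vec.dim {v}" by (rule vec.dim_mono)
  have ne: "u$i *s v \<noteq> 0" using i assms(2)
    by (metis vector_mul_lcancel vector_smult_rzero)
  have "{u$i *s v} \<subseteq> rows (outer u v)" by (auto simp: rows_def rw[symmetric])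
  hence "vec.dim {u$i *s v} \<le> vec.dim (rows (outer u v))" by (rule vec.dim_subset)
  thus ?thesis using le ne assms(2) unfolding row_rank_def_gen by simp
qed

lemma bil_sub: "bil A (x - a *s x') y = bil A x y - a * bil A x' y"
  by (simp add: bil_def algebra_simps sum_subtractf sum_distrib_left)
lemma bil_sub2: "bil A x (y - a *s y') = bil A x y - a * bil A x y'"
  by (simp add: bil_def algebra_simps sum_subtractf sum_distrib_left)
lemma bil_add: "bil A (x + x') y = bil A x y + bil A x' y"
  by (simp add: bil_def algebra_simps sum.distrib)
lemma bil_axis: "bil A (axis i 1) (axis j 1) = A$i$j"
proof -
  have e: "(if a then 1 else 0) * b * (if c then 1 else 0) = (if a then (if c then b else 0) else 0)" for a c and b :: complex
    by simp
  have e2: "(\<Sum>ja\<in>S. if P then f ja else 0) = (if P then sum f S else (0::complex))" for P S f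
    by simp
  show ?thesis unfolding bil_def axis_def by (simp only: vec_lambda_beta e e2) simp
qed

lemma kernel_prop:
  fixes \<phi> \<psi> :: "complex^'n \<Rightarrow> complex"
  assumes lp: "\<And>x y a. \<phi> (x - a *s y) = \<phi> x - a * \<phi> y"
    and lq: "\<And>x y a. \<psi> (x - a *s y) = \<psi> x - a * \<psi> y"
    and z: "\<And>x. \<phi> x = 0 \<longleftrightarrow> \<psi> x = 0"
  shows "\<exists>k. \<forall>x. \<psi> x = k * \<phi> x"
proof (cases "\<forall>x. \<phi> x = 0")
  case True thus ?thesis using z by auto
next
  case False
  then obtain x0 where x0: "\<phi> x0 \<noteq> 0" by auto
  show ?thesis
  proof (intro exI allI)
    fix x
    have "\<phi> (x - (\<phi> x / \<phi> x0) *s x0) = 0" using lp x0 by simp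
    hence "\<psi> (x - (\<phi> x / \<phi> x0) *s x0) = 0" using z by blast
    hence "\<psi> x = (\<phi> x / \<phi> x0) * \<psi> x0" using lq by simp
    thus "\<psi> x = (\<psi> x0 / \<phi> x0) * \<phi> x" by simp
  qed
qed

lemma bil_core:
  fixes A B :: "complex^'n^'n"
  assumes z: "\<And>x y. bil A x y = 0 \<longleftrightarrow> bil B x y = 0"
  shows "\<exists>k. B = cscale k A"
proof -
  have "\<forall>y. \<exists>c. \<forall>x. bil B x y = c * bil A x y"
    using kernel_prop[of "\<lambda>x. bil A x y" "\<lambda>x. bil B x y" for y] bil_sub z by blast
  then obtain C where C: "\<And>x y. bil B x y = C y * bil A x y" by metis
  have "\<forall>x. \<exists>d. \<forall>y. bil B x y = d * bil A x y"
    using kernel_prop[of "\<lambda>y. bil A x y" "\<lambda>y. bil B x y" for x] bil_sub2 z by blast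
  then obtain D where D: "\<And>x y. bil B x y = D x * bil A x y" by metis
  have CD: "C y = D x" if "bil A x y \<noteq> 0" for x y
    using C[of x y] D[of x y] that by simp
  have all: "\<exists>k. \<forall>x y. bil B x y = k * bil A x y"
  proof (cases "\<forall>x y. bil A x y = 0")
    case True thus ?thesis using z by auto
  next
    case False
    then obtain x0 y0 where n0: "bil A x0 y0 \<noteq> 0" by auto
    show ?thesis
    proof (intro exI allI)
      fix x y
      show "bil B x y = C y0 * bil A x y"
      proof (cases "bil A x y = 0")
        case True thus ?thesis using z by simp
      next
        case False
        have "\<exists>x'. bil A x' y \<noteq> 0 \<and> bil A x' y0 \<noteq> 0"
        proof (cases "bil A x0 y = 0")
          case False thus ?thesis using n0 by blast
        next
          case h1: True
          show ?thesis
          proof (cases "bil A x y0 = 0")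
            case False thus ?thesis using \<open>bil A x y \<noteq> 0\<close> by blast
          next
            case True
            thus ?thesis using h1 n0 \<open>bil A x y \<noteq> 0\<close>
              by (intro exI[of _ "x0 + x"]) (simp add: bil_add)
          qed
        qed
        then obtain x' where "bil A x' y \<noteq> 0" "bil A x' y0 \<noteq> 0" by blast
        hence "C y = C y0" using CD by metis
        thus ?thesis using C by simp
      qed
    qed
  qed
  then obtain k where k: "\<And>x y. bil B x y = k * bil A x y" by blast
  have "B = cscale k A"
    unfolding cscale_def vec_eq_iff using k[of "axis _ 1" "axis _ 1"] by (simp add: bil_axis)
  thus ?thesis by blast
qed

definition ip :: "complex^'n^'n \<Rightarrow> complex^'n^'n \<Rightarrow> complex" where
  "ip M N = (\<Sum>i\<in>UNIV. \<Sum>j\<in>UNIV. M$i$j * cnj (N$i$j))"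

lemma cs_ineq:
  fixes a b :: "'i::finite \<Rightarrow> complex"
  shows "cmod (\<Sum>i\<in>UNIV. a i * b i) \<le> L2_set (\<lambda>i. cmod (a i)) UNIV * L2_set (\<lambda>i. cmod (b i)) UNIV"
proof -
  have "cmod (\<Sum>i\<in>UNIV. a i * b i) \<le> (\<Sum>i\<in>UNIV. cmod (a i) * cmod (b i))"
    by (metis (no_types, lifting) norm_mult norm_sum sum.cong)
  also have "\<dots> = (\<Sum>i\<in>UNIV. \<bar>cmod (a i)\<bar> * \<bar>cmod (b i)\<bar>)" by simp
  also have "\<dots> \<le> L2_set (\<lambda>i. cmod (a i)) UNIV * L2_set (\<lambda>i. cmod (b i)) UNIV"
    by (rule L2_set_mult_ineq)
  finally show ?thesis .
qed

lemma norm_mv_le: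
  fixes M :: "complex^'n^'n"
  shows "norm (M *v x) \<le> norm M * norm x"
proof -
  have r: "norm ((M *v x)$i) \<le> norm (M$i) * norm x" for i
  proof -
    have "norm ((M *v x)$i) = cmod (\<Sum>j\<in>UNIV. M$i$j * x$j)"
      by (simp add: matrix_vector_mult_def)
    also have "\<dots> \<le> L2_set (\<lambda>j. cmod (M$i$j)) UNIV * L2_set (\<lambda>j. cmod (x$j)) UNIV"
      by (rule cs_ineq)
    finally show ?thesis by (simp add: norm_vec_def)
  qed
  have "norm (M *v x) = L2_set (\<lambda>i. norm ((M *v x)$i)) UNIV" by (simp add: norm_vec_def)
  also have "\<dots> \<le> L2_set (\<lambda>i. norm (M$i) * norm x) UNIV"
    by (rule L2_set_mono) (use r in auto)
  also have "\<dots> = norm M * norm x"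
    by (simp add: norm_vec_def L2_set_left_distrib)
  finally show ?thesis .
qed

lemma opnorm_le_norm: "opnorm (M::complex^'n^'n) \<le> norm M"
  unfolding opnorm_def by (rule onorm_bound) (auto simp: norm_mv_le)

lemma opnorm_ge: "norm (M *v x) \<le> opnorm (M::complex^'n^'n) * norm x"
  unfolding opnorm_def by (rule onorm) simp

lemma opnorm_nonneg: "0 \<le> opnorm (M::complex^'n^'n)"
  unfolding opnorm_def by (rule onorm_pos_le) simp

lemma norm_outer: "norm (outer u v) = norm u * norm v"
proof -
  have "norm ((outer u v)$i) = cmod (u$i) * norm v" for i
    by (simp add: outer_def norm_vec_def norm_mult L2_set_right_distrib)
  thus ?thesis by (simp add: norm_vec_def L2_set_left_distrib)
qed

lemma norm_sq_vec: "complex_of_real ((norm (u::complex^'n))^2) = (\<Sum>i\<in>UNIV. u$i * cnj (u$i))"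
proof -
  have "(norm u)^2 = (\<Sum>i\<in>UNIV. (cmod (u$i))^2)"
    by (simp add: norm_vec_def L2_set_def sum_nonneg)
  hence "complex_of_real ((norm u)^2) = (\<Sum>i\<in>UNIV. (complex_of_real (cmod (u$i)))^2)"
    by simp
  also have "\<dots> = (\<Sum>i\<in>UNIV. u$i * cnj (u$i))"
    by (rule sum.cong) (simp_all only: of_real_power[symmetric] complex_norm_square)
  finally show ?thesis .
qed

lemma norm_sq_mat: "complex_of_real ((norm (M::complex^'n^'n))^2) = ip M M"
proof -
  have "(norm M)^2 = (\<Sum>i\<in>UNIV. (norm (M$i))^2)"
    by (simp add: norm_vec_def L2_set_def sum_nonneg)
  hence "complex_of_real ((norm M)^2) = (\<Sum>i\<in>UNIV. complex_of_real ((norm (M$i))^2))"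
    by simp
  also have "\<dots> = ip M M" unfolding ip_def by (simp only: norm_sq_vec)
  finally show ?thesis .
qed

lemma lower_bound:
  fixes A :: "complex^'n^'n"
  assumes h: "l * ip A (outer u v) = 0"
  shows "norm u * norm v \<le> opnorm (outer u v + cscale l A)"
proof -
  define M where "M = outer u v + cscale l A"
  define z :: "complex^'n" where "z = (\<chi> j. cnj (v$j))"
  define w where "w = M *v z"
  define S where "S = (\<Sum>i\<in>UNIV. cnj (u$i) * w$i)"
  have "S = (\<Sum>i\<in>UNIV. u$i * cnj (u$i)) * (\<Sum>j\<in>UNIV. v$j * cnj (v$j)) + l * ip A (outer u v)"
    unfolding S_def w_def M_def z_def
    by (simp add: matrix_vector_mult_def outer_def cscale_def ip_def sum_distrib_left
        sum_distrib_right sum.distrib algebra_simps)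
       (rule sum.swap)
  also have "\<dots> = complex_of_real ((norm u)^2 * (norm v)^2)"
    using h by (simp only: norm_sq_vec[symmetric] of_real_mult) simp
  finally have S: "cmod S = (norm u)^2 * (norm v)^2" by (simp only: norm_of_real) simp
  have "cmod S \<le> L2_set (\<lambda>i. cmod (cnj (u$i))) UNIV * L2_set (\<lambda>i. cmod (w$i)) UNIV"
    unfolding S_def by (rule cs_ineq)
  hence "cmod S \<le> norm u * norm w" by (simp add: norm_vec_def)
  also have "norm w \<le> opnorm M * norm z" unfolding w_def by (rule opnorm_ge)
  also have "norm z = norm v" by (simp add: z_def norm_vec_def)
  finally have "cmod S \<le> norm u * (opnorm M * norm v)"
    by (simp add: mult_left_mono)
  hence key: "(norm u * norm v) * (norm u * norm v) \<le> (opnorm M) * (norm u * norm v)"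
    using S by (simp add: power2_eq_square algebra_simps)
  show ?thesis
  proof (cases "norm u * norm v = 0")
    case True thus ?thesis using opnorm_nonneg[of "outer u v + cscale l A"] by (metis mult_eq_0_iff)
  next
    case False
    hence "norm u * norm v > 0" by (simp add: less_le)
    thus ?thesis using key unfolding M_def by (meson mult_le_cancel_right_pos)
  qed
qed

lemma ip_expand:
  "ip (X + cscale l A) (X + cscale l A) = ip X X + l * ip A X + cnj l * cnj (ip A X) + (l * cnj l) * ip A A"
  unfolding ip_def cscale_def
  by (simp add: sum.distrib sum_distrib_left algebra_simps cnj_sum)

lemma upper_bound:
  fixes X A :: "complex^'n^'n"
  assumes g: "ip A X \<noteq> 0"
  shows "\<exists>l. norm (X + cscale l A) < norm X"
proof -
  define g where "g = ip A X"
  define N where "N = (norm A)^2"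
  define t where "t = 1 / (N + 1)"
  define l where "l = - (complex_of_real t * cnj g)"
  have N0: "N \<ge> 0" by (simp add: N_def)
  have t0: "t > 0" using N0 by (simp add: t_def)
  have tN: "t * N < 1" using N0 by (simp add: t_def)
  have q: "cmod g ^ 2 > 0" using g by (simp add: g_def)
  have gg: "(complex_of_real (cmod g))^2 = g * cnj g"
    using complex_norm_square[of g] by simp
  hence gg2: "complex_of_real (cmod g) * complex_of_real (cmod g) = g * cnj g"
    by (simp add: power2_eq_square)
  have lg: "l * g = - complex_of_real (t * (cmod g)^2)"
    by (simp add: l_def gg algebra_simps)
  have lg2: "cnj l * cnj g = - complex_of_real (t * (cmod g)^2)"
    using arg_cong[OF lg, of cnj] by (simp add: mult.commute)
  have ll: "l * cnj l = complex_of_real (t^2 * (cmod g)^2)"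
    by (simp add: l_def gg gg2 power2_eq_square algebra_simps)
  have "complex_of_real ((norm (X + cscale l A))^2)
        = complex_of_real ((norm X)^2 - 2 * (t * (cmod g)^2) + t^2 * (cmod g)^2 * N)"
    unfolding norm_sq_mat ip_expand
    by (simp add: g_def[symmetric] lg lg2 ll N_def norm_sq_mat[symmetric])
  hence e: "(norm (X + cscale l A))^2 = (norm X)^2 - 2 * (t * (cmod g)^2) + t^2 * (cmod g)^2 * N"
    using of_real_eq_iff by blast
  have "t^2 * (cmod g)^2 * N = (t * (cmod g)^2) * (t * N)" by (simp add: power2_eq_square)
  also have "\<dots> < t * (cmod g)^2 * 2" using tN t0 q
    by (intro mult_strict_left_mono) auto
  finally have "(norm (X + cscale l A))^2 < (norm X)^2" using e by linarith
  hence "norm (X + cscale l A) < norm X"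
    by (simp add: power_less_imp_less_base)
  thus ?thesis by blast
qed

lemma criterion:
  fixes A :: "complex^'n^'n"
  shows "bj_orth (outer u v) A \<longleftrightarrow> ip A (outer u v) = 0"
proof
  assume "ip A (outer u v) = 0"
  thus "bj_orth (outer u v) A"
    unfolding bj_orth_def
    using lower_bound opnorm_le_norm[of "outer u v"] norm_outer[of u v]
    by (metis mult_zero_right order_trans)
next
  assume b: "bj_orth (outer u v) A"
  show "ip A (outer u v) = 0"
  proof (rule ccontr)
    assume "ip A (outer u v) \<noteq> 0"
    then obtain l where l: "norm (outer u v + cscale l A) < norm (outer u v)"
      using upper_bound by blast
    have "opnorm (outer u v + cscale l A) \<le> norm (outer u v + cscale l A)"
      by (rule opnorm_le_norm)
    moreover have "outer u v + cscale 0 A = outer u v"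
      by (simp add: cscale_def vec_eq_iff)
    hence "norm (outer u v) \<le> opnorm (outer u v)"
      using lower_bound[of 0 A u v] norm_outer[of u v] by simp
    moreover have "opnorm (outer u v) \<le> opnorm (outer u v + cscale l A)"
      using b unfolding bj_orth_def by blast
    ultimately show False using l by linarith
  qed
qed

lemma cscale_cscale: "cscale a (cscale b M) = cscale (a * b) M"
  by (simp add: cscale_def vec_eq_iff mult.assoc)

lemma cscale_one: "cscale 1 M = M"
  by (simp add: cscale_def vec_eq_iff)

lemma orth_scale: "bj_orth X M \<Longrightarrow> bj_orth X (cscale k M)"
  unfolding bj_orth_def cscale_cscale by blast

lemma lperp_sub: "B = cscale k A \<Longrightarrow> lperp A \<subseteq> lperp B"
  unfolding lperp_def using orth_scale by blast

lemma cline_sub: "B = cscale k A \<Longrightarrow> cline B \<subseteq> cline A"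
  unfolding cline_def by (auto simp: cscale_cscale)

lemma ip_bil: "ip A (outer (\<chi> i. cnj (x$i)) (\<chi> j. cnj (y$j))) = bil A x y"
  unfolding ip_def bil_def outer_def by (simp add: algebra_simps)

theorem lemma3p7:
  fixes A B :: "complex^'n^'n"
  assumes "CARD('n) \<ge> 2"
  shows "cline A = cline B \<longleftrightarrow> lperp A \<inter> rank_one = lperp B \<inter> rank_one"
proof
  assume c: "cline A = cline B"
  have "A = cscale 1 A" by (simp add: cscale_one)
  hence "A \<in> cline A" unfolding cline_def by blast
  hence "A \<in> cline B" using c by simp
  then obtain k where k: "A = cscale k B" unfolding cline_def by blast
  have "B = cscale 1 B" by (simp add: cscale_one)
  hence "B \<in> cline B" unfolding cline_def by blast
  hence "B \<in> cline A" using c by simp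
  then obtain k' where k': "B = cscale k' A" unfolding cline_def by blast
  show "lperp A \<inter> rank_one = lperp B \<inter> rank_one"
    using lperp_sub[OF k] lperp_sub[OF k'] by blast
next
  assume H: "lperp A \<inter> rank_one = lperp B \<inter> rank_one"
  have z: "bil A x y = 0 \<longleftrightarrow> bil B x y = 0" for x y
  proof -
    define u :: "complex^'n" where "u = (\<chi> i. cnj (x$i))"
    define v :: "complex^'n" where "v = (\<chi> i. cnj (y$i))"
    show ?thesis
    proof (cases "u = 0 \<or> v = 0")
      case True
      hence "x = 0 \<or> y = 0" unfolding u_def v_def by (auto simp: vec_eq_iff)
      thus ?thesis by (auto simp: bil_def)
    next
      case False
      hence "rank (outer u v) = 1" by (simp add: rank_outer)
      hence "outer u v \<in> rank_one" by (simp add: rank_one_def)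
      hence "bj_orth (outer u v) A \<longleftrightarrow> bj_orth (outer u v) B"
        using H unfolding lperp_def by blast
      thus ?thesis using criterion ip_bil unfolding u_def v_def by metis
    qed
  qed
  obtain k where k: "B = cscale k A" using bil_core z by blast
  obtain k' where k': "A = cscale k' B" using bil_core z by metis
  show "cline A = cline B" using cline_sub[OF k] cline_sub[OF k'] by blast
qed

end
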